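(* Let $k\ge1$ be the cache size and let $N\ge k+1$. For the path access graph $P_N$ on $N$ vertices and $\mathcal{A}\in\{\mathrm{LRU},\mathrm{FAR}\}$, \[ \mathcal{I}^{P_N}[\mathrm{FWF},\mathcal{A}]=\left[0,\ 1-\frac{1}{k}\right]. \] Moreover, for $\mathcal{A}=\mathrm{LRU}$ the same equality $\mathcal{I}^{G}[\mathrm{FWF},\mathrm{LRU}]=[0,1-\frac1k]$ holds for any access graph $G$ containing a path on $k+1$ vertices.
   Context: Paging: a cache holds at most $k$ pages and is initially empty. A request to a page in the cache is a hit; otherwise it is a fault, the page is brought into the cache, evicting a page first if the cache is full. $\mathcal{A}(I)$ is the number of faults of $\mathcal{A}$ on request sequence $I$. LRU evicts the least recently requested cached page. FWF (flush-when-full): on a fault with a full cache, it empties the cache and then brings in the requested page. FAR (relative to the access graph): each requested page is marked; on a fault with a full cache, if all cached pages are marked it first unmarks all pages; it then evicts the unmarked cached page whose graph distance to the nearest marked page is largest, ties broken by evicting the least recently requested. Access graph: a graph $G$ whose vertices are the pages; a request sequence respects $G$ if any two consecutive requests are identical or adjacent in $G$; $L(G)$ is the set of such sequences. Relative interval: $\mathrm{Min}_{\mathcal{A},\mathcal{B}}(n,G)=\min\{\mathcal{A}(I)-\mathcal{B}(I): I\in L(G),|I|=n\}$, $\mathrm{Max}_{\mathcal{A},\mathcal{B}}(n,G)$ analogously with max; $\mathrm{Min}^G(\mathcal{A},\mathcal{B})=\liminf_{n\to\infty}\mathrm{Min}_{\mathcal{A},\mathcal{B}}(n,G)/n$, $\mathrm{Max}^G(\mathcal{A},\mathcal{B})=\limsup_{n\to\infty}\mathrm{Max}_{\mathcal{A},\mathcal{B}}(n,G)/n$,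 and $\mathcal{I}^G[\mathcal{A},\mathcal{B}]=[\mathrm{Min}^G(\mathcal{A},\mathcal{B}),\mathrm{Max}^G(\mathcal{A},\mathcal{B})]$. *)

theory Defs
  imports "HOL-Library.Extended_Real" "HOL-Library.Extended_Nat" "HOL-Library.Liminf_Limsup"
begin

definition respects_graph :: "'a set \<Rightarrow> ('a \<Rightarrow> 'a \<Rightarrow> bool) \<Rightarrow> 'a list \<Rightarrow> bool" where
  "respects_graph V E rs \<longleftrightarrow> set rs \<subseteq> V \<and>
     (\<forall>i. Suc i < length rs \<longrightarrow> rs ! i = rs ! Suc i \<or> E (rs ! i) (rs ! Suc i))"

definition gdist :: "('a \<Rightarrow> 'a \<Rightarrow> bool) \<Rightarrow> 'a \<Rightarrow> 'a \<Rightarrow> enat" where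
  "gdist E u v = (if \<exists>n. (E ^^ n) u v then enat (LEAST n. (E ^^ n) u v) else \<infinity>)"

text \<open>Path graph P_N on vertices 0..N-1.\<close>
definition path_edge :: "nat \<Rightarrow> nat \<Rightarrow> bool" where
  "path_edge i j \<longleftrightarrow> i + 1 = j \<or> j + 1 = i"

definition contains_path :: "'a set \<Rightarrow> ('a \<Rightarrow> 'a \<Rightarrow> bool) \<Rightarrow> nat \<Rightarrow> bool" where
  "contains_path V E m \<longleftrightarrow> (\<exists>vs. length vs = m \<and> distinct vs \<and> set vs \<subseteq> V \<and>
       (\<forall>i. Suc i < m \<longrightarrow> E (vs ! i) (vs ! Suc i)))"

definition last_req :: "'a list \<Rightarrow> 'a \<Rightarrow> nat" where
  "last_req h q = (GREATEST i. i < length h \<and> h ! i = q)"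

definition lru_step :: "nat \<Rightarrow> 'a list \<Rightarrow> 'a set \<Rightarrow> 'a \<Rightarrow> 'a set" where
  "lru_step k h C p =
     (if p \<in> C then C
      else if card C < k then insert p C
      else insert p (C - {ARG_MIN (last_req h) q. q \<in> C}))"

fun lru_aux :: "nat \<Rightarrow> 'a list \<Rightarrow> 'a set \<Rightarrow> 'a list \<Rightarrow> nat" where
  "lru_aux k h C [] = 0"
| "lru_aux k h C (p # ps) = (if p \<in> C then 0 else 1) + lru_aux k (h @ [p]) (lru_step k h C p) ps"

definition lru :: "nat \<Rightarrow> 'a list \<Rightarrow> nat" where
  "lru k rs = lru_aux k [] {} rs"

definition fwf_step :: "nat \<Rightarrow> 'a set \<Rightarrow> 'a \<Rightarrow> 'a set" where
  "fwf_step k C p = (if p \<in> C then C else if card C < k then insert p C else {p})"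

fun fwf_aux :: "nat \<Rightarrow> 'a set \<Rightarrow> 'a list \<Rightarrow> nat" where
  "fwf_aux k C [] = 0"
| "fwf_aux k C (p # ps) = (if p \<in> C then 0 else 1) + fwf_aux k (fwf_step k C p) ps"

definition fwf :: "nat \<Rightarrow> 'a list \<Rightarrow> nat" where
  "fwf k rs = fwf_aux k {} rs"

text \<open>FAR: state is (cache, marked pages).\<close>
definition far_step :: "nat \<Rightarrow> ('a \<Rightarrow> 'a \<Rightarrow> bool) \<Rightarrow> 'a list \<Rightarrow> 'a set \<times> 'a set \<Rightarrow> 'a
    \<Rightarrow> 'a set \<times> 'a set" where
  "far_step k E h S p =
     (let C = fst S; M = snd S in
      if p \<in> C then (C, insert p M)
      else if card C < k then (insert p C, insert p M)
      else
        let M' = insert p (if C \<subseteq> M then {} else M);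
            U = C - M';
            d = (\<lambda>q. Min ((\<lambda>m. gdist E q m) ` M'));
            D = Max (d ` U);
            v = (ARG_MIN (last_req h) q. q \<in> U \<and> d q = D)
        in (insert p (C - {v}), M'))"

fun far_aux :: "nat \<Rightarrow> ('a \<Rightarrow> 'a \<Rightarrow> bool) \<Rightarrow> 'a list \<Rightarrow> 'a set \<times> 'a set \<Rightarrow> 'a list \<Rightarrow> nat" where
  "far_aux k E h S [] = 0"
| "far_aux k E h S (p # ps) =
     (if p \<in> fst S then 0 else 1) + far_aux k E (h @ [p]) (far_step k E h S p) ps"

definition far :: "nat \<Rightarrow> ('a \<Rightarrow> 'a \<Rightarrow> bool) \<Rightarrow> 'a list \<Rightarrow> nat" where
  "far k E rs = far_aux k E [] ({}, {}) rs"

definition rel_min :: "('a list \<Rightarrow> nat) \<Rightarrow> ('a list \<Rightarrow> nat) \<Rightarrow> nat \<Rightarrow> 'a set \<Rightarrow> ('a \<Rightarrow> 'a \<Rightarrow> bool) \<Rightarrow> int" where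
  "rel_min A B n V E = Min {int (A rs) - int (B rs) | rs. respects_graph V E rs \<and> length rs = n}"

definition rel_max :: "('a list \<Rightarrow> nat) \<Rightarrow> ('a list \<Rightarrow> nat) \<Rightarrow> nat \<Rightarrow> 'a set \<Rightarrow> ('a \<Rightarrow> 'a \<Rightarrow> bool) \<Rightarrow> int" where
  "rel_max A B n V E = Max {int (A rs) - int (B rs) | rs. respects_graph V E rs \<and> length rs = n}"

definition rel_interval :: "('a list \<Rightarrow> nat) \<Rightarrow> ('a list \<Rightarrow> nat) \<Rightarrow> 'a set \<Rightarrow> ('a \<Rightarrow> 'a \<Rightarrow> bool) \<Rightarrow> ereal \<times> ereal" where
  "rel_interval A B V E =
     (liminf (\<lambda>n. ereal (real_of_int (rel_min A B n V E) / real n)),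
      limsup (\<lambda>n. ereal (real_of_int (rel_max A B n V E) / real n)))"

end

theory Submission
  imports Defs
begin


fun gaux :: "('a list \<Rightarrow> 's \<Rightarrow> 'a \<Rightarrow> 's) \<Rightarrow> ('s \<Rightarrow> 'a set) \<Rightarrow> 'a list \<Rightarrow> 's \<Rightarrow> 'a list \<Rightarrow> nat" where
  "gaux st c h S [] = 0"
| "gaux st c h S (p # ps) = (if p \<in> c S then 0 else 1) + gaux st c (h @ [p]) (st h S p) ps"

fun grun :: "('a list \<Rightarrow> 's \<Rightarrow> 'a \<Rightarrow> 's) \<Rightarrow> 'a list \<Rightarrow> 's \<Rightarrow> 'a list \<Rightarrow> 's" where
  "grun st h S [] = S"
| "grun st h S (p # ps) = grun st (h @ [p]) (st h S p) ps"

lemma gaux_append: "gaux st c h S (xs @ ys) = gaux st c h S xs + gaux st c (h @ xs) (grun st h S xs) ys"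
  by (induction xs arbitrary: h S) auto

lemma grun_append: "grun st h S (xs @ ys) = grun st (h @ xs) (grun st h S xs) ys"
  by (induction xs arbitrary: h S) auto

lemma gaux_le_len: "gaux st c h S xs \<le> length xs"
  by (induction xs arbitrary: h S) (simp_all add: le_SucI)

lemma fwf_gaux: "fwf_aux k F rs = gaux (\<lambda>h F p. fwf_step k F p) (\<lambda>x. x) h F rs"
  by (induction rs arbitrary: h F) auto
lemma fwf_gaux0: "fwf k rs = gaux (\<lambda>h F p. fwf_step k F p) (\<lambda>x. x) [] {} rs"
  by (simp add: fwf_def fwf_gaux[where h="[]"])
lemma lru_gaux: "lru_aux k h C rs = gaux (\<lambda>h C p. lru_step k h C p) (\<lambda>x. x) h C rs"
  by (induction rs arbitrary: h C) auto
lemma far_gaux: "far_aux k E h S rs = gaux (\<lambda>h S p. far_step k E h S p) fst h S rs"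
  by (induction rs arbitrary: h S) auto

lemma gaux_hits:
  assumes "\<And>h p. p \<in> c S \<Longrightarrow> st h S p = S" "set ps \<subseteq> c S"
  shows "gaux st c h S ps = 0 \<and> grun st h S ps = S"
  using assms(2) by (induction ps arbitrary: h) (auto simp: assms(1))

lemma far_hits:
  assumes "set ps \<subseteq> C"
  shows "gaux (\<lambda>h S p. far_step k E h S p) fst h (C, M) ps = 0
       \<and> grun (\<lambda>h S p. far_step k E h S p) h (C, M) ps = (C, M \<union> set ps)"
  using assms by (induction ps arbitrary: h M) (auto simp: far_step_def)

lemma fwf_fill:
  "distinct ps \<Longrightarrow> finite F \<Longrightarrow> set ps \<inter> F = {} \<Longrightarrow> card F + length ps \<le> k \<Longrightarrow>
   gaux (\<lambda>h F p. fwf_step k F p) (\<lambda>x. x) h F ps = length ps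
   \<and> grun (\<lambda>h F p. fwf_step k F p) h F ps = F \<union> set ps"
  by (induction ps arbitrary: h F) (auto simp: fwf_step_def)

lemma lru_fill:
  "distinct ps \<Longrightarrow> finite F \<Longrightarrow> set ps \<inter> F = {} \<Longrightarrow> card F + length ps \<le> k \<Longrightarrow>
   gaux (\<lambda>h C p. lru_step k h C p) (\<lambda>x. x) h F ps = length ps
   \<and> grun (\<lambda>h C p. lru_step k h C p) h F ps = F \<union> set ps"
  by (induction ps arbitrary: h F) (auto simp: lru_step_def)

lemma far_fill:
  "distinct ps \<Longrightarrow> finite F \<Longrightarrow> set ps \<inter> F = {} \<Longrightarrow> card F + length ps \<le> k \<Longrightarrow>
   gaux (\<lambda>h S p. far_step k E h S p) fst h (F, M) ps = length ps
   \<and> grun (\<lambda>h S p. far_step k E h S p) h (F, M) ps = (F \<union> set ps, M \<union> set ps)"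
  by (induction ps arbitrary: h F M) (auto simp: far_step_def)

lemma G1_generic:
  fixes k :: nat
  assumes k1: "k \<ge> 1"
    and pres: "\<And>h F S p. Inv h F S \<Longrightarrow> Inv (h @ [p]) (fwf_step k F p) (st h S p)"
    and sub: "\<And>h F S. Inv h F S \<Longrightarrow> F \<subseteq> c S \<and> finite (c S) \<and> card (c S) \<le> k"
  shows "Inv h F S \<Longrightarrow> gaux st c h S rs \<le> gaux (\<lambda>h F p. fwf_step k F p) (\<lambda>x. x) h F rs
     \<and> int k * (int (gaux (\<lambda>h F p. fwf_step k F p) (\<lambda>x. x) h F rs) - int (gaux st c h S rs))
        \<le> int (k - 1) * int (length rs) + int k - int (card F)"
proof (induction rs arbitrary: h F S)
  case Nil
  from sub[OF Nil] have "card F \<le> k" by (meson card_mono order_trans)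
  then show ?case by simp
next
  case (Cons p ps)
  from sub[OF Cons.prems] have FS: "F \<subseteq> c S" "finite (c S)" "card (c S) \<le> k" by auto
  have finF: "finite F" using FS finite_subset by blast
  have cF: "card F \<le> k" using FS card_mono order_trans by blast
  define F' where "F' = fwf_step k F p"
  have IH: "gaux st c (h@[p]) (st h S p) ps \<le> gaux (\<lambda>h F p. fwf_step k F p) (\<lambda>x. x) (h@[p]) F' ps
     \<and> int k * (int (gaux (\<lambda>h F p. fwf_step k F p) (\<lambda>x. x) (h@[p]) F' ps) - int (gaux st c (h@[p]) (st h S p) ps))
        \<le> int (k - 1) * int (length ps) + int k - int (card F')"
    unfolding F'_def by (rule Cons.IH[OF pres[OF Cons.prems]])
  show ?case
  proof (cases "p \<in> F")
    case True
    then have "F' = F" by (simp add: F'_def fwf_step_def)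
    with True IH FS show ?thesis by (auto simp: algebra_simps F'_def)
  next
    case False
    show ?thesis
    proof (cases "card F < k")
      case True
      then have F'e: "F' = insert p F" using False by (simp add: F'_def fwf_step_def)
      then have cF': "card F' = card F + 1" using False finF by simp
      show ?thesis using IH False cF' k1 by (auto simp: F'_def algebra_simps)
    next
      case c2: False
      then have F'e: "F' = {p}" using False by (simp add: F'_def fwf_step_def)
      have "card F = k" using c2 cF by simp
      then have "F = c S" using FS card_subset_eq by (metis antisym card_mono)
      then have "p \<notin> c S" using False by simp
      then show ?thesis using IH False F'e \<open>card F = k\<close> k1 by (auto simp: F'_def algebra_simps)
    qed
  qed
qed



lemma last_req_eqI:
  assumes "i < length h" "h ! i = q" "\<And>j. i < j \<Longrightarrow> j < length h \<Longrightarrow> h ! j \<noteq> q"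
  shows "last_req h q = i"
  unfolding last_req_def
  by (rule Greatest_equality) (use assms in \<open>force\<close>, metis assms(3) not_le)

lemma last_req_less:
  assumes "q \<in> set h" shows "last_req h q < length h"
proof -
  obtain i where "i < length h" "h ! i = q" using assms by (auto simp: in_set_conv_nth)
  then show ?thesis unfolding last_req_def
    using GreatestI_nat[of "\<lambda>i. i < length h \<and> h ! i = q" i "length h"] by auto
qed

lemma last_req_snoc_same: "last_req (h @ [p]) p = length h"
  by (rule last_req_eqI) auto

lemma last_req_snoc_other:
  assumes "q \<in> set h" "q \<noteq> p" shows "last_req (h @ [p]) q = last_req h q"
proof -
  have "\<And>i. (i < length (h@[p]) \<and> (h@[p]) ! i = q) = (i < length h \<and> h ! i = q)"
    using assms(2) by (auto simp: nth_append less_Suc_eq)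
  then show ?thesis unfolding last_req_def by presburger
qed

definition lru_inv :: "nat \<Rightarrow> 'a list \<Rightarrow> 'a set \<Rightarrow> 'a set \<Rightarrow> bool" where
  "lru_inv k h F C \<longleftrightarrow> finite C \<and> card C \<le> k \<and> F \<subseteq> C \<and> C \<subseteq> set h \<and>
     (\<forall>q\<in>F. \<forall>r\<in>C - F. last_req h r < last_req h q)"

lemma lru_inv_pres:
  assumes k1: "k \<ge> 1" and I: "lru_inv k h F C"
  shows "lru_inv k (h @ [p]) (fwf_step k F p) (lru_step k h C p)"
proof -
  define F' where "F' = fwf_step k F p"
  define C' where "C' = lru_step k h C p"
  define v where "v = (ARG_MIN (last_req h) q. q \<in> C)"
  from I have fin: "finite C" and cC: "card C \<le> k" and FC: "F \<subseteq> C" and Ch: "C \<subseteq> set h"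
    and lr: "\<forall>q\<in>F. \<forall>r\<in>C - F. last_req h r < last_req h q" by (auto simp: lru_inv_def)
  have finF: "finite F" using fin FC finite_subset by blast
  have pF': "p \<in> F'" by (auto simp: F'_def fwf_step_def)
  have F'cases: "F' = {p} \<or> F' = insert p F" by (auto simp: F'_def fwf_step_def)
  have C'sub: "C' \<subseteq> insert p C" by (auto simp: C'_def lru_step_def)
  have pC': "p \<in> C'" by (auto simp: C'_def lru_step_def)
  have vC: "C \<noteq> {} \<Longrightarrow> v \<in> C"
    unfolding v_def by (metis all_not_in_conv arg_min_nat_lemma)
  have fin': "finite C'" using C'sub fin finite_subset by blast
  have card': "card C' \<le> k"
  proof (cases "p \<in> C")
    case True then show ?thesis using cC by (simp add: C'_def lru_step_def)
  next
    case False
    show ?thesis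
    proof (cases "card C < k")
      case True then show ?thesis using False fin by (simp add: C'_def lru_step_def)
    next
      case c2: False
      then have "C \<noteq> {}" using k1 by auto
      then have "v \<in> C" by (rule vC)
      then have "C' = insert p (C - {v})" using False c2 by (simp add: C'_def lru_step_def v_def)
      then show ?thesis using \<open>v \<in> C\<close> False fin cC
        by (simp add: card_Diff_singleton) (metis One_nat_def Suc_pred card_gt_0_iff empty_iff le_eq_less_or_eq)
    qed
  qed
  have F'C': "F' \<subseteq> C'"
  proof (cases "p \<in> F")
    case True
    then have "F' = F" "C' = C" using FC by (auto simp: F'_def fwf_step_def C'_def lru_step_def)
    then show ?thesis using FC by simp
  next
    case False
    show ?thesis
    proof (cases "card F < k")
      case c2: False
      then show ?thesis using False pC' by (simp add: F'_def fwf_step_def)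
    next
      case True
      then have F'e: "F' = insert p F" using False by (simp add: F'_def fwf_step_def)
      have "F \<subseteq> C'"
      proof (cases "p \<in> C \<or> card C < k")
        case True then show ?thesis using FC by (auto simp: C'_def lru_step_def)
      next
        case c3: False
        then have "card C \<ge> k" by simp
        then have "F \<noteq> C" using \<open>card F < k\<close> by auto
        then obtain r where r: "r \<in> C" "r \<notin> F" using FC by blast
        have "last_req h v \<le> last_req h r" unfolding v_def by (rule arg_min_nat_le) (rule r(1))
        moreover have "v \<in> C" using vC r by blast
        ultimately have "v \<notin> F" using lr r by (meson DiffI leD)
        have "C' = insert p (C - {v})" using c3 by (simp add: C'_def lru_step_def v_def)
        then show ?thesis using \<open>v \<notin> F\<close> FC by blast
      qed
      then show ?thesis using F'e pC' by blast
    qed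
  qed
  have C'h: "C' \<subseteq> set (h @ [p])" using C'sub Ch by auto
  have lr': "\<forall>q\<in>F'. \<forall>r\<in>C' - F'. last_req (h@[p]) r < last_req (h@[p]) q"
  proof (intro ballI)
    fix q r assume q: "q \<in> F'" and r: "r \<in> C' - F'"
    have rp: "r \<noteq> p" using r pF' by blast
    have rC: "r \<in> C" using r C'sub rp by blast
    have rh: "r \<in> set h" using rC Ch by blast
    show "last_req (h@[p]) r < last_req (h@[p]) q"
    proof (cases "q = p")
      case True then show ?thesis using last_req_less[OF rh] last_req_snoc_other[OF rh rp]
        by (simp add: last_req_snoc_same)
    next
      case False
      then have "F' = insert p F" "q \<in> F" using F'cases q by auto
      then have "r \<notin> F" using r by blast
      have qh: "q \<in> set h" using \<open>q \<in> F\<close> FC Ch by blast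
      show ?thesis using lr \<open>q \<in> F\<close> rC \<open>r \<notin> F\<close> last_req_snoc_other[OF rh rp] last_req_snoc_other[OF qh False]
        by simp
    qed
  qed
  show ?thesis using fin' card' F'C' C'h lr' unfolding lru_inv_def F'_def C'_def by blast
qed

lemma lru_G1:
  assumes "k \<ge> 1"
  shows "lru k rs \<le> fwf k rs \<and> int k * (int (fwf k rs) - int (lru k rs)) \<le> int (k - 1) * int (length rs) + int k"
proof -
  have I0: "lru_inv k [] {} {}" by (simp add: lru_inv_def)
  have pres: "\<And>h F S p. lru_inv k h F S \<Longrightarrow> lru_inv k (h@[p]) (fwf_step k F p) ((\<lambda>h C p. lru_step k h C p) h S p)"
    by (simp add: lru_inv_pres[OF assms])
  have sub: "\<And>h F S. lru_inv k h F S \<Longrightarrow> F \<subseteq> (\<lambda>x. x) S \<and> finite ((\<lambda>x. x) S) \<and> card ((\<lambda>x. x) S) \<le> k"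
    by (simp add: lru_inv_def)
  have "gaux (\<lambda>h C p. lru_step k h C p) (\<lambda>x. x) [] {} rs \<le> gaux (\<lambda>h F p. fwf_step k F p) (\<lambda>x. x) [] {} rs
     \<and> int k * (int (gaux (\<lambda>h F p. fwf_step k F p) (\<lambda>x. x) [] {} rs) - int (gaux (\<lambda>h C p. lru_step k h C p) (\<lambda>x. x) [] {} rs))
        \<le> int (k - 1) * int (length rs) + int k - int (card ({}::'a set))"
    by (rule G1_generic[where Inv="lru_inv k" and st="\<lambda>h C p. lru_step k h C p" and c="\<lambda>x. x", OF assms pres sub I0])
  then show ?thesis by (simp add: lru_def lru_gaux fwf_gaux0)
qed



definition far_inv :: "nat \<Rightarrow> 'a set \<Rightarrow> 'a set \<times> 'a set \<Rightarrow> bool" where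
  "far_inv k F S \<longleftrightarrow> snd S = F \<and> finite (fst S) \<and> card (fst S) \<le> k \<and> F \<subseteq> fst S"

lemma far_inv_pres:
  assumes k1: "k \<ge> 1" and I: "far_inv k F (C, M)"
  shows "far_inv k (fwf_step k F p) (far_step k E h (C, M) p)"
proof -
  from I have MF: "M = F" and fin: "finite C" and cC: "card C \<le> k" and FC: "F \<subseteq> C"
    by (auto simp: far_inv_def)
  show ?thesis
  proof (cases "p \<in> C")
    case True
    have st: "far_step k E h (C, M) p = (C, insert p M)" using True by (simp add: far_step_def)
    have "p \<in> F \<or> card F < k"
    proof (cases "p \<in> F")
      case False
      then have "F \<subset> C" using FC True by blast
      then have "card F < card C" by (rule psubset_card_mono[OF fin])
      then show ?thesis using cC by simp
    qed simp
    then have fw: "fwf_step k F p = insert p F" by (auto simp: fwf_step_def)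
    show ?thesis unfolding st fw far_inv_def using MF fin cC FC True by simp
  next
    case pC: False
    then have pF: "p \<notin> F" using FC by blast
    show ?thesis
    proof (cases "card C < k")
      case True
      have st: "far_step k E h (C, M) p = (insert p C, insert p M)" using True pC by (simp add: far_step_def)
      have "card F < k" using True FC fin card_mono by (metis le_less_trans)
      then have fw: "fwf_step k F p = insert p F" using pF by (simp add: fwf_step_def)
      show ?thesis unfolding st fw far_inv_def using MF fin FC True pC by auto
    next
      case cf: False
      define M' where "M' = insert p (if C \<subseteq> M then {} else M)"
      define U where "U = C - M'"
      define d where "d = (\<lambda>q. Min ((\<lambda>m. gdist E q m) ` M'))"
      define D where "D = Max (d ` U)"
      define v where "v = (ARG_MIN (last_req h) q. q \<in> U \<and> d q = D)"
      have st: "far_step k E h (C, M) p = (insert p (C - {v}), M')"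
        using pC cf unfolding far_step_def Let_def M'_def U_def d_def D_def v_def by simp
      have Une: "U \<noteq> {}"
      proof (cases "C \<subseteq> M")
        case True
        have "C \<noteq> {}" using cf k1 by auto
        then show ?thesis using pC True by (auto simp: U_def M'_def)
      next
        case False then show ?thesis using pC by (auto simp: U_def M'_def)
      qed
      have finU: "finite U" using fin by (simp add: U_def)
      have "D \<in> d ` U" unfolding D_def using finU Une by (intro Max_in) auto
      then obtain u where "u \<in> U \<and> d u = D" by auto
      then have "v \<in> U" unfolding v_def by (metis (mono_tags, lifting) arg_min_nat_lemma)
      then have vC: "v \<in> C" "v \<notin> M'" by (auto simp: U_def)
      have cardC: "card C = k" using cf cC by simp
      have card': "card (insert p (C - {v})) \<le> k" using vC pC fin cardC k1
        by (simp add: card_Diff_singleton)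
      show ?thesis
      proof (cases "C \<subseteq> M")
        case True
        then have "F = C" using MF FC by blast
        then have "card F = k" using cardC by simp
        then have fw: "fwf_step k F p = {p}" using pF by (simp add: fwf_step_def)
        have M'e: "M' = {p}" using True by (simp add: M'_def)
        show ?thesis unfolding st fw far_inv_def M'e using card' fin by simp
      next
        case False
        then have "F \<noteq> C" using MF by blast
        then have "card F < k" using FC fin cardC by (metis card_subset_eq card_mono le_neq_implies_less)
        then have fw: "fwf_step k F p = insert p F" using pF by (simp add: fwf_step_def)
        have M'e: "M' = insert p F" using False MF by (simp add: M'_def)
        have "F \<subseteq> C - {v}" using vC(2) FC M'e by blast
        then show ?thesis unfolding st fw far_inv_def M'e using card' fin by auto
      qed
    qed
  qed
qed

lemma far_G1:
  assumes "k \<ge> 1"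
  shows "far k E rs \<le> fwf k rs \<and> int k * (int (fwf k rs) - int (far k E rs)) \<le> int (k - 1) * int (length rs) + int k"
proof -
  have I0: "far_inv k {} ({}, {})" by (simp add: far_inv_def)
  have pres: "\<And>h F S p. far_inv k F S \<Longrightarrow> far_inv k (fwf_step k F p) (far_step k E h S p)"
    using far_inv_pres[OF assms] by (metis prod.collapse)
  have sub: "\<And>h F S. far_inv k F S \<Longrightarrow> F \<subseteq> fst S \<and> finite (fst S) \<and> card (fst S) \<le> k"
    by (simp add: far_inv_def)
  have "gaux (\<lambda>h S p. far_step k E h S p) fst [] ({},{}) rs \<le> gaux (\<lambda>h F p. fwf_step k F p) (\<lambda>x. x) [] {} rs
     \<and> int k * (int (gaux (\<lambda>h F p. fwf_step k F p) (\<lambda>x. x) [] {} rs) - int (gaux (\<lambda>h S p. far_step k E h S p) fst [] ({},{}) rs))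
        \<le> int (k - 1) * int (length rs) + int k - int (card ({}::'a set))"
    by (rule G1_generic[where Inv="\<lambda>h. far_inv k", OF assms pres sub I0])
  then show ?thesis by (simp add: far_def far_gaux fwf_gaux0)
qed



definition zz :: "nat \<Rightarrow> nat \<Rightarrow> nat" where
  "zz k t = (if t mod (2*k) \<le> k then t mod (2*k) else 2*k - t mod (2*k))"

lemma zz_le: "zz k t \<le> k"
  unfolding zz_def by auto

lemma zz_phase:
  assumes "i < k" shows "zz k (m*k + i) = (if even m then i else k - i)"
proof (cases "even m")
  case True
  then obtain a where m: "m = 2*a" by (elim evenE)
  have "(m*k + i) mod (2*k) = i" using assms unfolding m
    by (metis add.commute mod_less mod_mult_self2 mult.assoc mult.commute less_trans_Suc
        trans_less_add1 mult_2 add_less_mono)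
  then show ?thesis using True assms by (simp add: zz_def)
next
  case False
  then obtain a where m: "m = 2*a + 1" by (elim oddE)
  have eq: "m*k + i = (k + i) + a * (2*k)" unfolding m by (simp add: algebra_simps)
  have "(m*k + i) mod (2*k) = ((k + i) + a * (2*k)) mod (2*k)" by (simp only: eq)
  also have "\<dots> = (k + i) mod (2*k)" by (rule mod_mult_self1)
  also have "\<dots> = k + i" using assms by simp
  finally have "(m*k + i) mod (2*k) = k + i" .
  then show ?thesis using False assms by (auto simp: zz_def)
qed

lemma zz_step:
  assumes "k \<ge> 1" shows "zz k (Suc t) = Suc (zz k t) \<or> zz k t = Suc (zz k (Suc t))"
proof -
  define r where "r = t mod (2*k)"
  have r2: "r < 2*k" using assms by (simp add: r_def)
  have sm: "Suc t mod (2*k) = (if Suc r = 2*k then 0 else Suc r)" by (simp add: r_def mod_Suc)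
  show ?thesis using r2 assms unfolding zz_def sm r_def[symmetric] by (auto; linarith)
qed

lemma zig_respects:
  assumes k1: "k \<ge> 1" and E: "\<forall>j<k. E (g j) (g (Suc j)) \<and> E (g (Suc j)) (g j)"
    and V: "\<forall>j\<le>k. g j \<in> V"
  shows "respects_graph V E (map (\<lambda>t. g (zz k t)) [0..<n])"
  unfolding respects_graph_def
proof (intro conjI allI impI)
  show "set (map (\<lambda>t. g (zz k t)) [0..<n]) \<subseteq> V" using V zz_le by auto
next
  fix i assume i: "Suc i < length (map (\<lambda>t. g (zz k t)) [0..<n])"
  then have "i < n" "Suc i < n" by auto
  have "E (g (zz k i)) (g (zz k (Suc i)))"
    using zz_step[OF k1, of i] zz_le[of k i] zz_le[of k "Suc i"] E by auto
  then show "map (\<lambda>t. g (zz k t)) [0..<n] ! i = map (\<lambda>t. g (zz k t)) [0..<n] ! Suc i \<or>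
     E (map (\<lambda>t. g (zz k t)) [0..<n] ! i) (map (\<lambda>t. g (zz k t)) [0..<n] ! Suc i)"
    using \<open>Suc i < n\<close> by simp
qed

definition plist :: "(nat \<Rightarrow> 'a) \<Rightarrow> nat \<Rightarrow> nat \<Rightarrow> 'a list" where
  "plist g k m = map (\<lambda>i. g (if even m then i else k - i)) [0..<k]"

lemma phase_eq: "map (\<lambda>t. g (zz k t)) [m*k..<m*k+k] = plist g k m"
  unfolding plist_def by (rule nth_equalityI) (auto simp: zz_phase)

lemma plist_Cons: "k \<ge> 1 \<Longrightarrow> plist g k m = g (if even m then 0 else k) #
   map (\<lambda>i. g (if even m then i else k - i)) [1..<k]"
  unfolding plist_def by (simp add: upt_conv_Cons)

lemma length_plist[simp]: "length (plist g k m) = k"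
  by (simp add: plist_def)

lemma image_rev_range: "(\<lambda>i. k - i) ` {0..<k} = {1..(k::nat)}"
proof
  show "(\<lambda>i. k - i) ` {0..<k} \<subseteq> {1..k}" by auto
  show "{1..k} \<subseteq> (\<lambda>i. k - i) ` {0..<k}"
  proof
    fix x assume "x \<in> {1..k}"
    then have "x = k - (k - x)" "k - x \<in> {0..<k}" by auto
    then show "x \<in> (\<lambda>i. k - i) ` {0..<k}" by blast
  qed
qed

lemma set_plist: "set (plist g k m) = g ` (if even m then {0..<k} else {1..k})"
proof -
  have "set (plist g k m) = g ` ((\<lambda>i. if even m then i else k - i) ` {0..<k})"
    unfolding plist_def by (simp add: image_image)
  also have "(\<lambda>i. if even m then i else k - i) ` {0..<k} = (if even m then {0..<k} else {1..k})"
    using image_rev_range[of k] by auto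
  finally show ?thesis .
qed

lemma distinct_plist:
  assumes "inj_on g {0..k}" shows "distinct (plist g k m)"
  unfolding plist_def distinct_map
proof
  show "inj_on (\<lambda>i. g (if even m then i else k - i)) (set [0..<k])"
  proof (rule inj_onI)
    fix x y assume "x \<in> set [0..<k]" "y \<in> set [0..<k]"
      and "g (if even m then x else k - x) = g (if even m then y else k - y)"
    then show "x = y" using inj_onD[OF assms] by (cases "even m") fastforce+
  qed
qed simp

lemma card_plist: "inj_on g {0..k} \<Longrightarrow> card (set (plist g k m)) = k"
  using distinct_card[OF distinct_plist] by simp

lemma first_notin_prev:
  assumes "inj_on g {0..k}" "k \<ge> 1" "m \<ge> 1"
  shows "g (if even m then 0 else k) \<notin> set (plist g k (m - 1))"
proof (cases "even m")
  case True
  then have "odd (m - 1)" using assms(3) by simp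
  have "g 0 \<notin> g ` {1..k}"
  proof
    assume "g 0 \<in> g ` {1..k}"
    then obtain x where "x \<in> {1..k}" "g 0 = g x" by auto
    then have "0 = x" using inj_onD[OF assms(1), of 0 x] by auto
    then show False using \<open>x \<in> {1..k}\<close> by simp
  qed
  then show ?thesis using True \<open>odd (m - 1)\<close> by (simp add: set_plist)
next
  case False
  then have "even (m - 1)" using assms(3) by simp
  then show ?thesis using False inj_onD[OF assms(1)] by (fastforce simp: set_plist)
qed

lemma phases:
  assumes Q0: "Q 0 Si"
    and step: "\<And>m S. Q m S \<Longrightarrow> gaux st c (map zp [0..<m*k]) S (map zp [m*k..<m*k+k]) = cst m
        \<and> Q (Suc m) (grun st (map zp [0..<m*k]) S (map zp [m*k..<m*k+k]))"
  shows "gaux st c [] Si (map zp [0..<m*k]) = (\<Sum>i<m. cst i) \<and> Q m (grun st [] Si (map zp [0..<m*k]))"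
proof (induction m)
  case 0 then show ?case using Q0 by simp
next
  case (Suc m)
  have up: "map zp [0..<Suc m * k] = map zp [0..<m*k] @ map zp [m*k..<m*k+k]"
    by (metis add.commute mult_Suc upt_add_eq_append zero_le map_append)
  show ?case unfolding up gaux_append grun_append using Suc step[OF Suc[THEN conjunct2]]
    by simp
qed



lemma fwf_phase_step:
  assumes k1: "k \<ge> 1" and inj: "inj_on g {0..k}"
    and Q: "(if m = 0 then F = {} else F = set (plist g k (m - 1)))"
  shows "gaux (\<lambda>h F p. fwf_step k F p) (\<lambda>x. x) h F (plist g k m) = k
     \<and> (if Suc m = 0 then grun (\<lambda>h F p. fwf_step k F p) h F (plist g k m) = {}
        else grun (\<lambda>h F p. fwf_step k F p) h F (plist g k m) = set (plist g k (Suc m - 1)))"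
proof (cases "m = 0")
  case True
  then have F: "F = {}" using Q by simp
  show ?thesis using fwf_fill[where ps="plist g k m" and F="{}" and k=k and h=h] distinct_plist[OF inj, of m] F True by simp
next
  case False
  then have F: "F = set (plist g k (m - 1))" using Q by simp
  define p0 where "p0 = g (if even m then 0 else k)"
  define rest where "rest = map (\<lambda>i. g (if even m then i else k - i)) [1..<k]"
  have pl: "plist g k m = p0 # rest" unfolding p0_def rest_def by (rule plist_Cons[OF k1])
  have dist: "distinct (p0 # rest)" using distinct_plist[OF inj, of m] pl by simp
  have p0F: "p0 \<notin> F" unfolding F p0_def using first_notin_prev[OF inj k1] False by simp
  have cF: "card F = k" unfolding F by (rule card_plist[OF inj])
  have lr: "length rest = k - 1" by (simp add: rest_def)
  have st1: "fwf_step k F p0 = {p0}" using p0F cF by (simp add: fwf_step_def)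
  have fill: "gaux (\<lambda>h F p. fwf_step k F p) (\<lambda>x. x) (h @ [p0]) {p0} rest = length rest
     \<and> grun (\<lambda>h F p. fwf_step k F p) (h @ [p0]) {p0} rest = {p0} \<union> set rest"
    by (rule fwf_fill) (use dist lr k1 in auto)
  show ?thesis using fill st1 p0F lr k1 pl by simp
qed

lemma sum_cost_le: "(\<Sum>i<m. (if i = 0 then k else 1::nat)) \<le> k + m"
  by (induction m) auto

lemma lower_generic:
  fixes g :: "nat \<Rightarrow> 'a" and st :: "'a list \<Rightarrow> 's \<Rightarrow> 'a \<Rightarrow> 's"
  assumes k1: "k \<ge> 1" and inj: "inj_on g {0..k}" and Q0: "Q 0 Si"
    and step: "\<And>m S. Q m S \<Longrightarrow>
        gaux st c (map (\<lambda>t. g (zz k t)) [0..<m*k]) S (plist g k m) = (if m = 0 then k else 1)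
        \<and> Q (Suc m) (grun st (map (\<lambda>t. g (zz k t)) [0..<m*k]) S (plist g k m))"
  shows "int (fwf k (map (\<lambda>t. g (zz k t)) [0..<n])) - int (gaux st c [] Si (map (\<lambda>t. g (zz k t)) [0..<n]))
     \<ge> int (k - 1) * int (n div k) - 2 * int k"
proof -
  define zp where "zp = (\<lambda>t. g (zz k t))"
  define m where "m = n div k"
  have mk: "m * k \<le> n" unfolding m_def by (simp add: div_times_less_eq_dividend)
  have rest_len: "n - m * k < k" unfolding m_def using k1
    by (metis minus_mult_div_eq_mod mod_less_divisor mult.commute neq0_conv not_one_le_zero)
  have split: "map zp [0..<n] = map zp [0..<m*k] @ map zp [m*k..<n]"
    using upt_add_eq_append[of 0 "m*k" "n - m*k"] mk by simp
  have phA: "gaux st c [] Si (map zp [0..<m*k]) = (\<Sum>i<m. (if i = 0 then k else 1))"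
    using phases[where Q=Q and Si=Si and st=st and c=c and zp=zp and k=k and cst="\<lambda>m. if m = 0 then k else 1", OF Q0]
      step by (simp add: phase_eq zp_def)
  have phF: "gaux (\<lambda>h F p. fwf_step k F p) (\<lambda>x. x) [] {} (map zp [0..<m*k]) = (\<Sum>i<m. k)"
    using phases[where Q="\<lambda>m F. if m = 0 then F = {} else F = set (plist g k (m - 1))" and Si="{}"
        and st="\<lambda>h F p. fwf_step k F p" and c="\<lambda>x. x" and zp=zp and k=k and cst="\<lambda>m. k"]
      fwf_phase_step[OF k1 inj] by (simp add: phase_eq zp_def)
  have A: "gaux st c [] Si (map zp [0..<n]) \<le> k + m + k"
  proof -
    have "gaux st c [] Si (map zp [0..<n]) = gaux st c [] Si (map zp [0..<m*k])
       + gaux st c ([] @ map zp [0..<m*k]) (grun st [] Si (map zp [0..<m*k])) (map zp [m*k..<n])"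
      unfolding split gaux_append ..
    moreover have "gaux st c [] Si (map zp [0..<m*k]) \<le> k + m" using phA sum_cost_le[where m=m and k=k] by simp
    moreover have "gaux st c ([] @ map zp [0..<m*k]) (grun st [] Si (map zp [0..<m*k])) (map zp [m*k..<n]) \<le> n - m*k"
      using gaux_le_len[of st c "[] @ map zp [0..<m*k]" "grun st [] Si (map zp [0..<m*k])" "map zp [m*k..<n]"] by simp
    ultimately show ?thesis using rest_len by linarith
  qed
  have F: "fwf k (map zp [0..<n]) \<ge> m * k"
  proof -
    have "fwf k (map zp [0..<n]) = gaux (\<lambda>h F p. fwf_step k F p) (\<lambda>x. x) [] {} (map zp [0..<m*k])
       + gaux (\<lambda>h F p. fwf_step k F p) (\<lambda>x. x) ([] @ map zp [0..<m*k]) (grun (\<lambda>h F p. fwf_step k F p) [] {} (map zp [0..<m*k])) (map zp [m*k..<n])"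
      unfolding fwf_gaux0 split gaux_append ..
    then show ?thesis using phF by simp
  qed
  have e1: "int (k - 1) * int (n div k) = int m * int k - int m" using k1 by (simp add: m_def algebra_simps of_nat_diff)
  have e2: "int (fwf k (map zp [0..<n])) \<ge> int m * int k" using F by (metis of_nat_mono of_nat_mult)
  have e3: "int (gaux st c [] Si (map zp [0..<n])) \<le> 2 * int k + int m" using A by linarith
  show ?thesis using e1 e2 e3 unfolding zp_def by linarith
qed



lemma plist_nth: "i < k \<Longrightarrow> plist g k m ! i = g (if even m then i else k - i)"
  by (simp add: plist_def)

lemma G_inj:
  fixes g :: "nat \<Rightarrow> 'a" and k m :: nat
  assumes inj: "inj_on g {0..k}" and "i < k" "j < k"
    and "g (if even m then i else k - i) = g (if even m then j else k - j)"
  shows "i = j"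
  using distinct_plist[OF inj, of m] assms(2-4) by (simp add: nth_eq_iff_index_eq plist_nth[symmetric])

lemma last_req_hist:
  fixes g :: "nat \<Rightarrow> 'a" and k m :: nat
  assumes inj: "inj_on g {0..k}" and i: "i < k"
  shows "last_req (map (\<lambda>t. g (zz k t)) [0..<Suc m*k]) (g (if even m then i else k - i)) = m*k + i"
proof (rule last_req_eqI)
  have mk: "Suc m * k = m*k + k" by simp
  show "m*k + i < length (map (\<lambda>t. g (zz k t)) [0..<Suc m*k])" using i by simp
  have "[0..<Suc m*k] ! (m*k + i) = m*k + i" using i by (simp only: mk nth_upt)
  moreover have "map (\<lambda>t. g (zz k t)) [0..<Suc m*k] ! (m*k + i) = g (zz k ([0..<Suc m*k] ! (m*k + i)))"
    by (rule nth_map) (use i in simp)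
  ultimately show "map (\<lambda>t. g (zz k t)) [0..<Suc m*k] ! (m*k + i) = g (if even m then i else k - i)"
    using zz_phase[OF i, of m] by simp
  fix j assume j1: "m*k + i < j" and j2: "j < length (map (\<lambda>t. g (zz k t)) [0..<Suc m*k])"
  define j' where "j' = j - m*k"
  have jj: "j = m*k + j'" "j' < k" "j' \<noteq> i" using j1 j2 unfolding j'_def by auto
  have "[0..<Suc m*k] ! j = j" using j2 by simp
  then have "map (\<lambda>t. g (zz k t)) [0..<Suc m*k] ! j = g (if even m then j' else k - j')"
    using j2 zz_phase[OF jj(2), of m] jj(1) by simp
  then show "map (\<lambda>t. g (zz k t)) [0..<Suc m*k] ! j \<noteq> g (if even m then i else k - i)"
    using G_inj[OF inj jj(2) i, of m] jj(3) by auto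
qed

lemma swap_even:
  fixes g :: "nat \<Rightarrow> 'a" and k :: nat
  assumes inj: "inj_on g {0..k}" and k1: "k \<ge> 1"
  shows "insert (g 0) (g ` {1..k} - {g k}) = g ` {0..<k}"
proof -
  have "g ` ({1..k} - {k}) = g ` {1..k} - g ` {k}" by (rule inj_on_image_set_diff[OF inj]) auto
  then have "g ` {1..k} - {g k} = g ` ({1..k} - {k})" by simp
  also have "{1..k} - {k} = {1..<k}" by auto
  finally have "insert (g 0) (g ` {1..k} - {g k}) = g ` insert 0 {1..<k}" by simp
  also have "insert 0 {1..<k} = {0..<k}" using k1 by auto
  finally show ?thesis .
qed

lemma swap_odd:
  fixes g :: "nat \<Rightarrow> 'a" and k :: nat
  assumes inj: "inj_on g {0..k}" and k1: "k \<ge> 1"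
  shows "insert (g k) (g ` {0..<k} - {g 0}) = g ` {1..k}"
proof -
  have "g ` ({0..<k} - {0}) = g ` {0..<k} - g ` {0}" by (rule inj_on_image_set_diff[OF inj]) auto
  then have "g ` {0..<k} - {g 0} = g ` ({0..<k} - {0})" by simp
  also have "{0..<k} - {0} = {1..<k}" by auto
  finally have "insert (g k) (g ` {0..<k} - {g 0}) = g ` insert k {1..<k}" by simp
  also have "insert k {1..<k} = {1..k}" using k1 by auto
  finally show ?thesis .
qed

lemma lru_phase_step:
  fixes g :: "nat \<Rightarrow> 'a" and k m :: nat
  assumes k1: "k \<ge> 1" and inj: "inj_on g {0..k}"
    and Q: "(if m = 0 then C = {} else C = set (plist g k (m - 1)))"
  shows "gaux (\<lambda>h C p. lru_step k h C p) (\<lambda>x. x) (map (\<lambda>t. g (zz k t)) [0..<m*k]) C (plist g k m) = (if m = 0 then k else 1)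
     \<and> (if Suc m = 0 then grun (\<lambda>h C p. lru_step k h C p) (map (\<lambda>t. g (zz k t)) [0..<m*k]) C (plist g k m) = {}
        else grun (\<lambda>h C p. lru_step k h C p) (map (\<lambda>t. g (zz k t)) [0..<m*k]) C (plist g k m) = set (plist g k (Suc m - 1)))"
proof (cases "m = 0")
  case True
  then have C: "C = {}" using Q by simp
  show ?thesis using lru_fill[where ps="plist g k m" and F="{}" and k=k and h="[]"] distinct_plist[OF inj, of m] C True by simp
next
  case False
  then have m1: "m \<ge> 1" by simp
  define h where "h = map (\<lambda>t. g (zz k t)) [0..<m*k]"
  define G where "G = (\<lambda>i. g (if even (m-1) then i else k - i))"
  have C: "C = G ` {0..<k}" using Q False by (simp add: G_def plist_def)
  define p0 where "p0 = g (if even m then 0 else k)"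
  define rest where "rest = map (\<lambda>i. g (if even m then i else k - i)) [1..<k]"
  have pl: "plist g k m = p0 # rest" unfolding p0_def rest_def by (rule plist_Cons[OF k1])
  have p0C: "p0 \<notin> C" using Q False first_notin_prev[OF inj k1 m1] by (simp add: p0_def)
  have cC: "card C = k" using Q False card_plist[OF inj] by simp
  have lrG: "\<And>i. i < k \<Longrightarrow> last_req h (G i) = (m-1)*k + i"
    unfolding h_def G_def using last_req_hist[OF inj, of _ "m-1"] m1 by (metis Suc_diff_1 less_eq_Suc_le One_nat_def)
  define v where "v = (ARG_MIN (last_req h) q. q \<in> C)"
  have G0C: "G 0 \<in> C" using C k1 by auto
  have vC: "v \<in> C"
    unfolding v_def using arg_min_nat_lemma[of "\<lambda>q. q \<in> C" "G 0" "last_req h"] G0C by blast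
  have vle: "last_req h v \<le> last_req h (G 0)"
    unfolding v_def by (rule arg_min_nat_le) (rule G0C)
  obtain i0 where i0: "i0 < k" "v = G i0" using vC C by auto
  then have "i0 = 0" using vle lrG[OF i0(1)] lrG[of 0] k1 by simp
  then have vG: "v = G 0" using i0 by simp
  have C': "lru_step k h C p0 = set (plist g k m)"
  proof -
    have "lru_step k h C p0 = insert p0 (C - {G 0})" using p0C cC by (simp add: lru_step_def v_def[symmetric] vG)
    also have "\<dots> = set (plist g k m)"
    proof (cases "even m")
      case True
      then have o: "odd (m-1)" using m1 by simp
      have Cs: "C = g ` {1..k}" using Q False o by (simp add: set_plist)
      have "G 0 = g k" "p0 = g 0" using o True by (simp_all add: G_def p0_def)
      then show ?thesis using True swap_even[OF inj k1] Cs by (simp add: set_plist)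
    next
      case False
      then have o: "even (m-1)" using m1 by simp
      have Cs: "C = g ` {0..<k}" using Q \<open>m \<noteq> 0\<close> o by (simp add: set_plist)
      have "G 0 = g 0" "p0 = g k" using o False by (simp_all add: G_def p0_def)
      then show ?thesis using False swap_odd[OF inj k1] Cs by (simp add: set_plist)
    qed
    finally show ?thesis .
  qed
  have restsub: "set rest \<subseteq> set (plist g k m)" using pl by auto
  have hits: "gaux (\<lambda>h C p. lru_step k h C p) (\<lambda>x. x) (h @ [p0]) (set (plist g k m)) rest = 0
     \<and> grun (\<lambda>h C p. lru_step k h C p) (h @ [p0]) (set (plist g k m)) rest = set (plist g k m)"
    by (rule gaux_hits) (use restsub in \<open>auto simp: lru_step_def\<close>)
  show ?thesis using hits C' p0C False unfolding h_def[symmetric] pl by (simp add: pl)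
qed



definition ndist :: "nat \<Rightarrow> nat \<Rightarrow> nat" where
  "ndist u v = (if u \<le> v then v - u else u - v)"

lemma pe_pow_dist: "(path_edge ^^ n) u v \<Longrightarrow> ndist u v \<le> n"
proof (induction n arbitrary: v)
  case 0 then show ?case by (auto elim: relpowp_0_E simp: ndist_def)
next
  case (Suc n)
  from Suc.prems obtain w where "(path_edge ^^ n) u w" "path_edge w v" by (elim relpowp_Suc_E)
  moreover have "ndist u w \<le> n" using Suc.IH calculation(1) .
  ultimately show ?case unfolding ndist_def path_edge_def by (auto split: if_splits)
qed

lemma pe_pow_up: "(path_edge ^^ d) u (u + d)"
proof (induction d)
  case 0 then show ?case by (simp add: relpowp_0_I)
next
  case (Suc d) then show ?case by (rule relpowp_Suc_I) (simp add: path_edge_def)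
qed

lemma pe_pow_down: "(path_edge ^^ d) (u + d) u"
proof (induction d)
  case 0 then show ?case by (simp add: relpowp_0_I)
next
  case (Suc d)
  have "path_edge (u + Suc d) (u + d)" by (simp add: path_edge_def)
  then show ?case using Suc by (rule relpowp_Suc_I2)
qed

lemma pe_pow_exact: "(path_edge ^^ ndist u v) u v"
proof (cases "u \<le> v")
  case True then show ?thesis using pe_pow_up[of "v - u" u] by (simp add: ndist_def)
next
  case False then show ?thesis using pe_pow_down[of "u - v" v] by (simp add: ndist_def)
qed

lemma gdist_path: "gdist path_edge u v = enat (ndist u v)"
proof -
  have "(LEAST n. (path_edge ^^ n) u v) = ndist u v"
    by (rule Least_equality) (use pe_pow_exact pe_pow_dist in auto)
  then show ?thesis unfolding gdist_def using pe_pow_exact by auto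
qed

lemma far_flush:
  assumes fin: "finite C" and cC: "card C = k" and pC: "p \<notin> C" and CM: "C \<subseteq> M"
    and vC: "v \<in> C" and far: "\<forall>q\<in>C. q \<noteq> v \<longrightarrow> gdist E q p < gdist E v p"
  shows "far_step k E h (C, M) p = (insert p (C - {v}), {p})"
proof -
  have Mx: "(MAX x\<in>C. gdist E x p) = gdist E v p"
    by (rule Max_eqI) (use fin vC far in \<open>auto simp: less_imp_le\<close>)
  have P: "\<And>q. (q \<in> C \<and> q \<noteq> p \<and> gdist E q p = (MAX x\<in>C. gdist E x p)) = (q = v)"
    using vC far pC Mx by auto
  have A: "(ARG_MIN (last_req h) q. q \<in> C \<and> q \<noteq> p \<and> gdist E q p = (MAX x\<in>C. gdist E x p)) = v"
    unfolding P using arg_min_nat_lemma[of "\<lambda>q. q = v" v "last_req h"] by simp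
  show ?thesis using pC cC CM A by (simp add: far_step_def Let_def)
qed

lemma far_phase_step:
  fixes k m :: nat
  assumes k1: "k \<ge> 1"
    and Q: "(if m = 0 then S = ({}, {}) else S = (set (plist id k (m - 1)), set (plist id k (m - 1))))"
  shows "gaux (\<lambda>h S p. far_step k path_edge h S p) fst (map (\<lambda>t. id (zz k t)) [0..<m*k]) S (plist id k m) = (if m = 0 then k else 1)
     \<and> (if Suc m = 0 then grun (\<lambda>h S p. far_step k path_edge h S p) (map (\<lambda>t. id (zz k t)) [0..<m*k]) S (plist id k m) = ({}, {})
        else grun (\<lambda>h S p. far_step k path_edge h S p) (map (\<lambda>t. id (zz k t)) [0..<m*k]) S (plist id k m)
          = (set (plist id k (Suc m - 1)), set (plist id k (Suc m - 1))))"
proof -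
  have inj: "inj_on (id::nat \<Rightarrow> nat) {0..k}" by simp
  define h where "h = map (\<lambda>t. id (zz k t)) [0..<m*k]"
  show ?thesis
  proof (cases "m = 0")
    case True
    then have S: "S = ({}, {})" using Q by simp
    show ?thesis using far_fill[where ps="plist id k m" and F="{}" and M="{}" and k=k and h="[]" and E=path_edge]
        distinct_plist[OF inj, of m] S True by simp
  next
    case False
    then have m1: "m \<ge> 1" by simp
    define C where "C = set (plist id k (m - 1))"
    have S: "S = (C, C)" using Q False by (simp add: C_def)
    define p0 where "p0 = id (if even m then 0 else k)"
    define rest where "rest = map (\<lambda>i. id (if even m then i else k - i)) [1..<k]"
    have pl: "plist id k m = p0 # rest" unfolding p0_def rest_def by (rule plist_Cons[OF k1])
    have p0C: "p0 \<notin> C" using first_notin_prev[OF inj k1 m1] by (simp add: p0_def C_def)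
    have cC: "card C = k" using card_plist[OF inj] by (simp add: C_def)
    have fin: "finite C" by (simp add: C_def)
    define v where "v = (if even m then k else 0)"
    have C'eq: "insert p0 (C - {v}) = set (plist id k m)"
    proof (cases "even m")
      case True
      then have o: "odd (m-1)" using m1 by simp
      have Cs: "C = id ` {1..k}" using o by (simp add: set_plist C_def)
      show ?thesis using True swap_even[OF inj k1] Cs by (simp add: set_plist p0_def v_def)
    next
      case False
      then have o: "even (m-1)" using m1 by simp
      have Cs: "C = id ` {0..<k}" using o by (simp add: set_plist C_def)
      show ?thesis using False swap_odd[OF inj k1] Cs by (simp add: set_plist p0_def v_def)
    qed
    have vC: "v \<in> C" and farv: "\<forall>q\<in>C. q \<noteq> v \<longrightarrow> gdist path_edge q p0 < gdist path_edge v p0"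
    proof -
      have "v \<in> C \<and> (\<forall>q\<in>C. q \<noteq> v \<longrightarrow> gdist path_edge q p0 < gdist path_edge v p0)"
      proof (cases "even m")
        case True
        then have o: "odd (m-1)" using m1 by simp
        have Cs: "C = {1..k}" using o by (simp add: set_plist C_def)
        show ?thesis using True Cs k1 by (auto simp: v_def p0_def gdist_path ndist_def)
      next
        case False
        then have o: "even (m-1)" using m1 by simp
        have Cs: "C = {0..<k}" using o by (simp add: set_plist C_def)
        show ?thesis using False Cs k1 by (auto simp: v_def p0_def gdist_path ndist_def)
      qed
      then show "v \<in> C" "\<forall>q\<in>C. q \<noteq> v \<longrightarrow> gdist path_edge q p0 < gdist path_edge v p0" by auto
    qed
    have st1: "far_step k path_edge h (C, C) p0 = (set (plist id k m), {p0})"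
      using far_flush[OF fin cC p0C _ vC farv] C'eq by simp
    have restsub: "set rest \<subseteq> set (plist id k m)" using pl by auto
    have hits: "gaux (\<lambda>h S p. far_step k path_edge h S p) fst (h @ [p0]) (set (plist id k m), {p0}) rest = 0
       \<and> grun (\<lambda>h S p. far_step k path_edge h S p) (h @ [p0]) (set (plist id k m), {p0}) rest
          = (set (plist id k m), {p0} \<union> set rest)"
      by (rule far_hits[OF restsub])
    have "{p0} \<union> set rest = set (plist id k m)" using pl by simp
    then show ?thesis using hits st1 p0C False S unfolding h_def[symmetric] pl by (simp add: pl)
  qed
qed



lemma interval_from_bounds:
  fixes A :: "'a list \<Rightarrow> nat" and k :: nat and V :: "'a set"
  assumes finV: "finite V" and k1: "k \<ge> 1"
    and G1: "\<And>rs. A rs \<le> fwf k rs \<and> int k * (int (fwf k rs) - int (A rs)) \<le> int (k - 1) * int (length rs) + int k"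
    and G2: "\<And>n. \<exists>rs. respects_graph V E rs \<and> length rs = n \<and> A rs = fwf k rs"
    and G3: "\<And>n. \<exists>rs. respects_graph V E rs \<and> length rs = n \<and>
               int (fwf k rs) - int (A rs) \<ge> int (k - 1) * int (n div k) - 2 * int k"
  shows "rel_interval (fwf k) A V E = (0, ereal (1 - 1 / real k))"
proof -
  define S where "S n = (\<lambda>rs. int (fwf k rs) - int (A rs)) ` {rs. respects_graph V E rs \<and> length rs = n}" for n
  have Seq: "{int (fwf k rs) - int (A rs) | rs. respects_graph V E rs \<and> length rs = n} = S n" for n
    unfolding S_def using Setcompr_eq_image[of "\<lambda>rs. int (fwf k rs) - int (A rs)" "{rs. respects_graph V E rs \<and> length rs = n}"] by simp
  have finS: "finite (S n)" for n
  proof -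
    have "{rs. respects_graph V E rs \<and> length rs = n} \<subseteq> {rs. set rs \<subseteq> V \<and> length rs = n}"
      by (auto simp: respects_graph_def)
    then have "finite {rs. respects_graph V E rs \<and> length rs = n}"
      using finite_lists_length_eq[OF finV] finite_subset by blast
    then show ?thesis unfolding S_def by (rule finite_imageI)
  qed
  have memS: "respects_graph V E rs \<Longrightarrow> int (fwf k rs) - int (A rs) \<in> S (length rs)" for rs
    unfolding S_def by (rule imageI) simp
  have ne: "\<exists>x. x \<in> S n" for n
  proof -
    obtain rs where rs: "respects_graph V E rs" "length rs = n" using G2[of n] by blast
    then show ?thesis using memS[OF rs(1)] by blast
  qed
  have min0: "rel_min (fwf k) A n V E = 0" for n
  proof -
    have "Min (S n) = 0"
    proof (rule Min_eqI[OF finS])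
      fix y assume "y \<in> S n"
      then obtain rs where "y = int (fwf k rs) - int (A rs)" unfolding S_def by (rule imageE)
      then show "0 \<le> y" using G1[of rs] by simp
    next
      obtain rs where rs: "respects_graph V E rs" "length rs = n" "A rs = fwf k rs" using G2[of n] by blast
      then have "int (fwf k rs) - int (A rs) \<in> S n" using memS[OF rs(1)] by simp
      then show "0 \<in> S n" using rs(3) by simp
    qed
    then show ?thesis by (simp add: rel_min_def Seq)
  qed
  define R where "R n = rel_max (fwf k) A n V E" for n
  have RS: "R n = Max (S n)" for n by (simp add: R_def rel_max_def Seq)
  have Rup: "int k * R n \<le> int (k - 1) * int n + int k" for n
  proof -
    have "R n \<in> S n" unfolding RS using finS[of n] ne[of n] by (intro Max_in) auto
    then obtain rs where "R n = int (fwf k rs) - int (A rs)" "length rs = n" unfolding S_def by (rule imageE) simp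
    then show ?thesis using G1[of rs] by simp
  qed
  have Rlo: "R n \<ge> int (k - 1) * int (n div k) - 2 * int k" for n
  proof -
    obtain rs where rs: "respects_graph V E rs" "length rs = n"
      "int (fwf k rs) - int (A rs) \<ge> int (k - 1) * int (n div k) - 2 * int k" using G3[of n] by blast
    then have "int (fwf k rs) - int (A rs) \<in> S n" using memS[OF rs(1)] by simp
    then have "int (fwf k rs) - int (A rs) \<le> R n" unfolding RS by (rule Max_ge[OF finS])
    then show ?thesis using rs(3) by linarith
  qed
  define a where "a = 1 - 1 / real k"
  have kpos: "real k > 0" using k1 by simp
  have up: "real_of_int (R n) / real n \<le> a + 1 / real n" if n: "n \<ge> 1" for n
  proof -
    have "real_of_int (int k * R n) \<le> real_of_int (int (k - 1) * int n + int k)"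
      using Rup[of n] by (simp only: of_int_le_iff)
    then have "real k * real_of_int (R n) \<le> (real k - 1) * real n + real k"
      using k1 by (simp add: of_nat_diff)
    then have "real_of_int (R n) \<le> ((real k - 1) * real n + real k) / real k"
      using kpos by (simp add: field_simps)
    also have "\<dots> = a * real n + 1" using kpos by (simp add: a_def field_simps)
    finally show ?thesis using n by (simp add: field_simps)
  qed
  have lo: "a - 3 * real k / real n \<le> real_of_int (R n) / real n" if n: "n \<ge> 1" for n
  proof -
    have nd: "real n \<le> real (n div k) * real k + real k"
    proof -
      have "n = n div k * k + n mod k" by simp
      moreover have "n mod k < k" using k1 by simp
      ultimately have "n \<le> n div k * k + k" by linarith
      then show ?thesis by (metis of_nat_add of_nat_le_iff of_nat_mult)
    qed
    have "real_of_int (int (k - 1) * int (n div k) - 2 * int k) \<le> real_of_int (R n)"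
      using Rlo[of n] by (simp only: of_int_le_iff)
    then have "real_of_int (R n) \<ge> (real k - 1) * real (n div k) - 2 * real k"
      using k1 by (simp add: of_nat_diff)
    moreover have "(real k - 1) * real (n div k) \<ge> (real k - 1) * (real n / real k - 1)"
    proof (rule mult_left_mono)
      show "real n / real k - 1 \<le> real (n div k)" using nd kpos by (simp add: field_simps)
      show "0 \<le> real k - 1" using k1 by simp
    qed
    moreover have "(real k - 1) * (real n / real k - 1) - 2 * real k \<ge> a * real n - 3 * real k"
      using kpos k1 by (simp add: a_def field_simps)
    ultimately have "real_of_int (R n) \<ge> a * real n - 3 * real k" by linarith
    then have "(a * real n - 3 * real k) / real n \<le> real_of_int (R n) / real n"
      by (rule divide_right_mono) simp
    moreover have "(a * real n - 3 * real k) / real n = a - 3 * real k / real n" using n by (simp add: field_simps)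
    ultimately show ?thesis by simp
  qed
  have lim: "(\<lambda>n. real_of_int (R n) / real n) \<longlonglongrightarrow> a"
  proof (rule tendsto_sandwich[where f="\<lambda>n. a - 3 * real k / real n" and h="\<lambda>n. a + 1 / real n"])
    show "\<forall>\<^sub>F n in sequentially. a - 3 * real k / real n \<le> real_of_int (R n) / real n"
      using lo by (simp add: eventually_sequentially) blast
    show "\<forall>\<^sub>F n in sequentially. real_of_int (R n) / real n \<le> a + 1 / real n"
      using up by (simp add: eventually_sequentially) blast
    show "(\<lambda>n. a - 3 * real k / real n) \<longlonglongrightarrow> a"
      using tendsto_diff[OF tendsto_const[of a] lim_const_over_n[of "3 * real k"]] by simp
    show "(\<lambda>n. a + 1 / real n) \<longlonglongrightarrow> a"
      using tendsto_add[OF tendsto_const[of a] lim_const_over_n[of 1]] by simp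
  qed
  have "limsup (\<lambda>n. ereal (real_of_int (R n) / real n)) = ereal a"
    by (rule lim_imp_Limsup) (auto intro: lim)
  moreover have "liminf (\<lambda>n. ereal (real_of_int (rel_min (fwf k) A n V E) / real n)) = 0"
    by (simp add: min0 zero_ereal_def[symmetric] Liminf_const)
  ultimately show ?thesis unfolding rel_interval_def R_def a_def by simp
qed



lemma fwf_rep: "fwf k (replicate n p) = (if n = 0 then 0 else 1)" if "k \<ge> 1"
proof (cases n)
  case (Suc n')
  have st: "fwf_step k {} p = {p}" using that by (simp add: fwf_step_def)
  have "gaux (\<lambda>h F p. fwf_step k F p) (\<lambda>x. x) ([] @ [p]) {p} (replicate n' p) = 0"
    using gaux_hits[where S="{p}" and st="\<lambda>h F p. fwf_step k F p" and c="\<lambda>x. x" and ps="replicate n' p"]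
    by (simp add: fwf_step_def set_replicate_conv_if)
  then show ?thesis using Suc st by (simp add: fwf_gaux0)
qed (simp add: fwf_def)

lemma lru_rep: "lru k (replicate n p) = (if n = 0 then 0 else 1)" if "k \<ge> 1"
proof (cases n)
  case (Suc n')
  have st: "lru_step k [] {} p = {p}" using that by (simp add: lru_step_def)
  have "gaux (\<lambda>h C p. lru_step k h C p) (\<lambda>x. x) ([] @ [p]) {p} (replicate n' p) = 0"
    using gaux_hits[where S="{p}" and st="\<lambda>h C p. lru_step k h C p" and c="\<lambda>x. x" and ps="replicate n' p"]
    by (simp add: lru_step_def set_replicate_conv_if)
  then show ?thesis using Suc st by (simp add: lru_def lru_gaux)
qed (simp add: lru_def)

lemma far_rep: "far k E (replicate n p) = (if n = 0 then 0 else 1)" if "k \<ge> 1"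
proof (cases n)
  case (Suc n')
  have st: "far_step k E [] ({}, {}) p = ({p}, {p})" using that by (simp add: far_step_def)
  have "gaux (\<lambda>h S p. far_step k E h S p) fst ([] @ [p]) ({p}, {p}) (replicate n' p) = 0"
    using far_hits[where C="{p}" and M="{p}" and ps="replicate n' p" and k=k and E=E] by (simp add: set_replicate_conv_if)
  then show ?thesis using Suc st by (simp add: far_def far_gaux)
qed (simp add: far_def)

lemma rep_respects: "p \<in> V \<Longrightarrow> respects_graph V E (replicate n p)"
  by (simp add: respects_graph_def set_replicate_conv_if)

lemma lru_general:
  fixes V :: "'a set" and k :: nat
  assumes k1: "k \<ge> 1" and finV: "finite V" and sym: "\<forall>u v. E u v \<longrightarrow> E v u"
    and cp: "contains_path V E (k + 1)"
  shows "rel_interval (fwf k) (lru k) V E = (0, ereal (1 - 1 / real k))"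
proof -
  obtain vs where vs: "length vs = k + 1" "distinct vs" "set vs \<subseteq> V"
    "\<forall>i. Suc i < k + 1 \<longrightarrow> E (vs ! i) (vs ! Suc i)" using cp unfolding contains_path_def by blast
  define g where "g = (\<lambda>j. vs ! j)"
  have inj: "inj_on g {0..k}"
    unfolding g_def by (rule inj_onI) (use vs in \<open>auto simp: nth_eq_iff_index_eq\<close>)
  have gV: "\<forall>j\<le>k. g j \<in> V" using vs unfolding g_def by (auto intro: nth_mem)
  have gE: "\<forall>j<k. E (g j) (g (Suc j)) \<and> E (g (Suc j)) (g j)" using vs sym unfolding g_def by auto
  have p0V: "g 0 \<in> V" using gV by auto
  show ?thesis
  proof (rule interval_from_bounds[OF finV k1])
    show "\<And>rs. lru k rs \<le> fwf k rs \<and> int k * (int (fwf k rs) - int (lru k rs)) \<le> int (k - 1) * int (length rs) + int k"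
      using lru_G1[OF k1] by blast
    show "\<And>n. \<exists>rs. respects_graph V E rs \<and> length rs = n \<and> lru k rs = fwf k rs"
      using rep_respects[OF p0V] lru_rep[OF k1] fwf_rep[OF k1] by (metis length_replicate)
    fix n
    have resp: "respects_graph V E (map (\<lambda>t. g (zz k t)) [0..<n])" by (rule zig_respects[OF k1 gE gV])
    have "int (fwf k (map (\<lambda>t. g (zz k t)) [0..<n])) - int (gaux (\<lambda>h C p. lru_step k h C p) (\<lambda>x. x) [] {} (map (\<lambda>t. g (zz k t)) [0..<n]))
      \<ge> int (k - 1) * int (n div k) - 2 * int k"
      by (rule lower_generic[where Q="\<lambda>m C. if m = 0 then C = {} else C = set (plist g k (m - 1))", OF k1 inj])
        (use lru_phase_step[OF k1 inj] in auto)
    then show "\<exists>rs. respects_graph V E rs \<and> length rs = n \<and>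
               int (fwf k rs) - int (lru k rs) \<ge> int (k - 1) * int (n div k) - 2 * int k"
      using resp by (intro exI[of _ "map (\<lambda>t. g (zz k t)) [0..<n]"]) (simp add: lru_def lru_gaux)
  qed
qed

lemma far_path:
  fixes k N :: nat
  assumes k1: "k \<ge> 1" and N: "N \<ge> k + 1"
  shows "rel_interval (fwf k) (far k path_edge) {0..<N} path_edge = (0, ereal (1 - 1 / real k))"
proof (rule interval_from_bounds[OF _ k1])
  show "finite {0..<N}" by simp
  show "\<And>rs. far k path_edge rs \<le> fwf k rs \<and> int k * (int (fwf k rs) - int (far k path_edge rs)) \<le> int (k - 1) * int (length rs) + int k"
    using far_G1[OF k1] by blast
  have p0V: "(0::nat) \<in> {0..<N}" using N by simp
  show "\<And>n. \<exists>rs. respects_graph {0..<N} path_edge rs \<and> length rs = n \<and> far k path_edge rs = fwf k rs"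
    using rep_respects[OF p0V] far_rep[OF k1] fwf_rep[OF k1] by (metis length_replicate)
  fix n
  have inj: "inj_on (id::nat \<Rightarrow> nat) {0..k}" by simp
  have gV: "\<forall>j\<le>k. id j \<in> {0..<N}" using N by auto
  have gE: "\<forall>j<k. path_edge (id j) (id (Suc j)) \<and> path_edge (id (Suc j)) (id j)" by (simp add: path_edge_def)
  have resp: "respects_graph {0..<N} path_edge (map (\<lambda>t. id (zz k t)) [0..<n])" by (rule zig_respects[OF k1 gE gV])
  have "int (fwf k (map (\<lambda>t. id (zz k t)) [0..<n])) - int (gaux (\<lambda>h S p. far_step k path_edge h S p) fst [] ({}, {}) (map (\<lambda>t. id (zz k t)) [0..<n]))
    \<ge> int (k - 1) * int (n div k) - 2 * int k"
    by (rule lower_generic[where Q="\<lambda>m S. if m = 0 then S = ({}, {}) else S = (set (plist id k (m - 1)), set (plist id k (m - 1)))", OF k1 inj])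
      (use far_phase_step[OF k1] in auto)
  then show "\<exists>rs. respects_graph {0..<N} path_edge rs \<and> length rs = n \<and>
             int (fwf k rs) - int (far k path_edge rs) \<ge> int (k - 1) * int (n div k) - 2 * int k"
    using resp by (intro exI[of _ "map (\<lambda>t. id (zz k t)) [0..<n]"]) (simp add: far_def far_gaux)
qed

theorem theorem2:
  fixes k N :: nat
  assumes "k \<ge> 1" and "N \<ge> k + 1"
  shows "rel_interval (fwf k) (lru k) {0..<N} path_edge = (0, ereal (1 - 1 / real k))
       \<and> rel_interval (fwf k) (far k path_edge) {0..<N} path_edge = (0, ereal (1 - 1 / real k))
       \<and> (\<forall>(V :: 'a set) E. finite V \<and> (\<forall>u v. E u v \<longrightarrow> u \<in> V \<and> v \<in> V)
             \<and> (\<forall>u v. E u v \<longrightarrow> E v u) \<and> contains_path V E (k + 1)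
           \<longrightarrow> rel_interval (fwf k) (lru k) V E = (0, ereal (1 - 1 / real k)))"
proof (intro conjI allI impI)
  have cp: "contains_path {0..<N} path_edge (k + 1)"
    unfolding contains_path_def using assms(2)
    by (intro exI[of _ "[0..<k+1]"]) (auto simp: path_edge_def nth_upt simp del: upt_Suc)
  show "rel_interval (fwf k) (lru k) {0..<N} path_edge = (0, ereal (1 - 1 / real k))"
    by (rule lru_general[OF assms(1) _ _ cp]) (auto simp: path_edge_def)
  show "rel_interval (fwf k) (far k path_edge) {0..<N} path_edge = (0, ereal (1 - 1 / real k))"
    by (rule far_path[OF assms])
  fix V :: "'a set" and E
  assume "finite V \<and> (\<forall>u v. E u v \<longrightarrow> u \<in> V \<and> v \<in> V) \<and> (\<forall>u v. E u v \<longrightarrow> E v u) \<and> contains_path V E (k + 1)"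
  then show "rel_interval (fwf k) (lru k) V E = (0, ereal (1 - 1 / real k))"
    using lru_general[OF assms(1)] by blast
qed


end
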